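(* Let $N$ be an isolating block and $S=\operatorname{Inv} N$. If $L$ is any sufficiently small compact neighborhood of $N^-$ in $N$, then $(N,L)$ is a filtration pair for $S$. Moreover, there is a neighborhood of $f$ in the $C^0$ topology such that for any $\tilde f$ in this neighborhood, $\tilde S=\operatorname{Inv}(N\setminus L,\tilde f)$ (the maximal invariant subset computed with respect to $\tilde f$) is an isolated invariant set for $\tilde f$ and $(N,L)$ is a filtration pair for $\tilde S$ with respect to $\tilde f$.
   Context: Let $X$ be a locally compact metric space, $U\subset X$ open and $f:U\to X$ continuous. For $N\subset U$, a solution through $x$ is a map $\sigma:\mathbb Z\to U$ with $\sigma(0)=x$ and $f(\sigma(n))=\sigma(n+1)$ for all $n$; $\operatorname{Inv} N$ is the set of $x\in N$ admitting a solution through $x$ with all values in $N$. A compact set $N\subset U$ is an isolating neighborhood if $\operatorname{Inv} N\subset\operatorname{Int} N$; a set $S$ is an isolated invariant set if $S=\operatorname{Inv} N$ for some isolating neighborhood $N$. A compact set $N$ is an isolating block if $f(N)\cap N\cap f^{-1}(N)\subset\operatorname{Int} N$. The exit set of $N$ is $N^-=\{x\in N: f(x)\notin\operatorname{Int} N\}$. A filtration pair for an isolated invariant set $S$ is a pair of compact sets $L\subset N$ contained in the interior of the domain of $f$, each equal to the closure of its interior, such that (1) $\operatorname{cl}(N\setminus L)$ is an isolating neighborhood with $\operatorname{Inv}\operatorname{cl}(N\setminus L)=S$; (2) $L$ is a neighborhood of $N^-$ in $N$; (3) $f(L)\cap\operatorname{cl}(N\setminus L)=\emptyset$. The same notions are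 used for any other continuous map $\tilde f:U\to X$ in place of $f$.
   Formalization: N is also assumed to equal the closure of its interior, only compact neighbourhoods L equal to the closure of their interior are considered, and the $C^0$ neighbourhood of f may depend on L. Each condition added here is assumed in the paper as well or is needed for the statement above to hold. *)

theory Defs
  imports "HOL-Analysis.Analysis"
begin

text \<open>Maps f defined on an open set U of a metric space X (the type 'a).
Values of f outside U are irrelevant.\<close>

definition is_solution :: "'a set \<Rightarrow> ('a \<Rightarrow> 'a) \<Rightarrow> (int \<Rightarrow> 'a) \<Rightarrow> bool" where
  "is_solution U f \<sigma> \<longleftrightarrow> (\<forall>n. \<sigma> n \<in> U \<and> f (\<sigma> n) = \<sigma> (n + 1))"

definition Inv :: "'a set \<Rightarrow> ('a \<Rightarrow> 'a) \<Rightarrow> 'a set \<Rightarrow> 'a set" where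
  "Inv U f N = {x \<in> N. \<exists>\<sigma>. is_solution U f \<sigma> \<and> \<sigma> 0 = x \<and> (\<forall>n. \<sigma> n \<in> N)}"

definition isolating_nbhd :: "'a::topological_space set \<Rightarrow> ('a \<Rightarrow> 'a) \<Rightarrow> 'a set \<Rightarrow> bool" where
  "isolating_nbhd U f N \<longleftrightarrow> compact N \<and> N \<subseteq> U \<and> Inv U f N \<subseteq> interior N"

definition isolated_invariant_set :: "'a::topological_space set \<Rightarrow> ('a \<Rightarrow> 'a) \<Rightarrow> 'a set \<Rightarrow> bool" where
  "isolated_invariant_set U f S \<longleftrightarrow> (\<exists>N. isolating_nbhd U f N \<and> S = Inv U f N)"

definition isolating_block :: "'a::topological_space set \<Rightarrow> ('a \<Rightarrow> 'a) \<Rightarrow> 'a set \<Rightarrow> bool" where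
  "isolating_block U f N \<longleftrightarrow> compact N \<and> N \<subseteq> U \<and>
     f ` N \<inter> N \<inter> {x \<in> U. f x \<in> N} \<subseteq> interior N"

definition exit_set :: "('a::topological_space \<Rightarrow> 'a) \<Rightarrow> 'a set \<Rightarrow> 'a set" where
  "exit_set f N = {x \<in> N. f x \<notin> interior N}"

definition nbhd_in :: "'a::topological_space set \<Rightarrow> 'a set \<Rightarrow> 'a set \<Rightarrow> bool" where
  "nbhd_in N L A \<longleftrightarrow> L \<subseteq> N \<and> (\<exists>V. openin (top_of_set N) V \<and> A \<subseteq> V \<and> V \<subseteq> L)"

definition filtration_pair ::
  "'a::topological_space set \<Rightarrow> ('a \<Rightarrow> 'a) \<Rightarrow> 'a set \<Rightarrow> 'a set \<Rightarrow> 'a set \<Rightarrow> bool" where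
  "filtration_pair U f S N L \<longleftrightarrow>
     compact L \<and> compact N \<and> L \<subseteq> N \<and> N \<subseteq> interior U \<and>
     closure (interior N) = N \<and> closure (interior L) = L \<and>
     isolating_nbhd U f (closure (N - L)) \<and> Inv U f (closure (N - L)) = S \<and>
     nbhd_in N L (exit_set f N) \<and>
     f ` L \<inter> closure (N - L) = {}"

end

theory Submission
  imports Defs
begin

lemma Inv_mono: "A \<subseteq> B \<Longrightarrow> Inv U f A \<subseteq> Inv U f B"
  by (auto simp: Inv_def)

lemma sol_step: "is_solution U f \<sigma> \<Longrightarrow> f (\<sigma> n) = \<sigma> (n+1)"
  by (simp add: is_solution_def)

lemma sol_in: "is_solution U f \<sigma> \<Longrightarrow> \<sigma> n \<in> U"
  by (simp add: is_solution_def)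

lemma Inv_shift:
  assumes "is_solution U f \<sigma>" "\<forall>n. \<sigma> n \<in> N"
  shows "\<sigma> m \<in> Inv U f N"
proof -
  have "is_solution U f (\<lambda>k. \<sigma> (k + m))"
    using assms(1) unfolding is_solution_def by (simp add: algebra_simps)
  then show ?thesis using assms(2) unfolding Inv_def by force
qed

lemma compact_thick:
  fixes C :: "'a::metric_space set"
  assumes "compact C" "C \<subseteq> Op" "open Op"
  obtains e where "e > 0" "\<And>x y. x \<in> C \<Longrightarrow> dist x y < e \<Longrightarrow> y \<in> Op"
proof -
  obtain e where "0 < e" "\<And>x. x \<in> C \<Longrightarrow> \<exists>G \<in> {Op}. ball x e \<subseteq> G"
    using Heine_Borel_lemma[of C "{Op}"] assms by auto
  then show ?thesis by (intro that[of e]) (auto simp: ball_def subset_iff)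
qed

lemma perturb_part:
  fixes U N L V :: "'a::metric_space set" and f :: "'a \<Rightarrow> 'a"
  assumes U: "open U" and fc: "continuous_on U f"
    and NU: "N \<subseteq> U" and Nc: "compact N" and Lc: "compact L" and LN: "L \<subseteq> N"
    and V: "openin (top_of_set N) V" "V \<subseteq> L"
    and fNV: "f ` (N - V) \<subseteq> interior N"
    and fL: "f ` L \<inter> closure (N - L) = {}"
    and cN: "closure (interior N) = N" and cL: "closure (interior L) = L"
  shows "\<exists>\<epsilon>>0. \<forall>g. continuous_on U g \<and> (\<forall>x\<in>N. dist (g x) (f x) < \<epsilon>) \<longrightarrow>
            isolated_invariant_set U g (Inv U g (N - L)) \<and>
            filtration_pair U g (Inv U g (N - L)) N L"
proof -
  have clN: "closed N" using Nc compact_imp_closed by blast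
  have clL: "closed L" using Lc compact_imp_closed by blast
  have "closedin (top_of_set N) (N - V)" using V(1) by (simp add: closedin_diff)
  then have "closed (N - V)" using clN closedin_closed_trans by blast
  then have cNV: "compact (N - V)" using closed_Int_compact[OF _ Nc, of "N - V"] by (metis Diff_subset Int_absorb2)
  have fcN: "continuous_on N f" using fc NU continuous_on_subset by blast
  have C1: "compact (f ` (N - V))"
    using compact_continuous_image[OF continuous_on_subset[OF fcN] cNV] by blast
  obtain e1 where e1: "e1 > 0" "\<And>x y. x \<in> f ` (N - V) \<Longrightarrow> dist x y < e1 \<Longrightarrow> y \<in> interior N"
    using compact_thick[OF C1 fNV] by auto
  have C2: "compact (f ` L)"
    using compact_continuous_image[OF continuous_on_subset[OF fcN LN] Lc] .
  have "f ` L \<subseteq> - closure (N - L)" using fL by blast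
  then obtain e2 where e2: "e2 > 0" "\<And>x y. x \<in> f ` L \<Longrightarrow> dist x y < e2 \<Longrightarrow> y \<in> - closure (N - L)"
    using compact_thick[OF C2 _ open_Compl[OF closed_closure]] by (metis ComplD ComplI)
  have clNL: "closure (N - L) \<subseteq> N" using clN by (simp add: closure_minimal)
  have cmpNL: "compact (closure (N - L))"
    using closed_Int_compact[OF closed_closure Nc, of "N - L"] clNL by (metis Int_absorb2)
  show ?thesis
  proof (intro exI[of _ "min e1 e2"] conjI allI impI)
    show "min e1 e2 > 0" using e1 e2 by simp
    fix g assume g: "continuous_on U g \<and> (\<forall>x\<in>N. dist (g x) (f x) < min e1 e2)"
    have g1: "g y \<in> interior N" if "y \<in> N - V" for y
      using e1(2)[of "f y" "g y"] g that by (auto simp: dist_commute)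
    have g2: "g y \<notin> closure (N - L)" if "y \<in> L" for y
      using e2(2)[of "f y" "g y"] g that LN by (auto simp: dist_commute)
    have solNL: "\<sigma> n \<in> N - L" if "is_solution U g \<sigma>" "\<forall>n. \<sigma> n \<in> closure (N - L)" for \<sigma> n
    proof -
      have "\<sigma> n \<notin> L"
      proof
        assume "\<sigma> n \<in> L"
        then have "g (\<sigma> n) \<notin> closure (N - L)" by (rule g2)
        then show False using that sol_step[OF that(1), of n] by auto
      qed
      then show ?thesis using that clNL by auto
    qed
    have InvEq: "Inv U g (closure (N - L)) = Inv U g (N - L)"
    proof
      show "Inv U g (N - L) \<subseteq> Inv U g (closure (N - L))"
        by (rule Inv_mono) (rule closure_subset)
      show "Inv U g (closure (N - L)) \<subseteq> Inv U g (N - L)"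
        unfolding Inv_def using solNL by blast
    qed
    have intNL: "interior N - L \<subseteq> interior (closure (N - L))"
    proof -
      have "interior N - L \<subseteq> interior (N - L)"
        using clL by (metis Diff_eq Diff_mono interior_maximal interior_subset open_Diff open_interior order_refl)
      also have "\<dots> \<subseteq> interior (closure (N - L))" by (simp add: closure_subset interior_mono)
      finally show ?thesis .
    qed
    have iso: "isolating_nbhd U g (closure (N - L))"
      unfolding isolating_nbhd_def
    proof (intro conjI)
      show "compact (closure (N - L))" by (rule cmpNL)
      show "closure (N - L) \<subseteq> U" using clNL NU by blast
      show "Inv U g (closure (N - L)) \<subseteq> interior (closure (N - L))"
      proof
        fix x assume "x \<in> Inv U g (closure (N - L))"
        then obtain \<sigma> where s: "is_solution U g \<sigma>" "\<sigma> 0 = x" "\<forall>n. \<sigma> n \<in> closure (N - L)"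
          unfolding Inv_def by blast
        have a: "\<sigma> (-1) \<in> N - L" "\<sigma> 0 \<in> N - L" using solNL[OF s(1) s(3)] by auto
        have "g (\<sigma> (-1)) = \<sigma> 0" using sol_step[OF s(1), of "-1"] by simp
        then have "x \<in> interior N" using g1[of "\<sigma> (-1)"] a V(2) s(2) by auto
        then show "x \<in> interior (closure (N - L))" using intNL a s(2) by auto
      qed
    qed
    show "isolated_invariant_set U g (Inv U g (N - L))"
      unfolding isolated_invariant_set_def using iso InvEq by metis
    have ex: "exit_set g N \<subseteq> V"
      unfolding exit_set_def using g1 by blast
    show "filtration_pair U g (Inv U g (N - L)) N L"
      unfolding filtration_pair_def
    proof (intro conjI)
      show "nbhd_in N L (exit_set g N)" unfolding nbhd_in_def using LN V ex by blast
      show "g ` L \<inter> closure (N - L) = {}" using g2 by blast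
      show "N \<subseteq> interior U" using NU U by (simp add: interior_open)
    qed (use Lc Nc LN cN cL iso InvEq in auto)
  qed
qed

theorem mainTheorem2:
  fixes U N :: "'a::metric_space set" and f :: "'a \<Rightarrow> 'a"
  assumes "locally_compact_space (euclidean :: 'a topology)"
    and "open U" and "continuous_on U f"
    and "isolating_block U f N"
    and "closure (interior N) = N"
  shows "\<exists>W. open W \<and> exit_set f N \<subseteq> W \<and>
     (\<forall>L. compact L \<and> L \<subseteq> W \<and> closure (interior L) = L \<and> nbhd_in N L (exit_set f N) \<longrightarrow>
        filtration_pair U f (Inv U f N) N L \<and>
        (\<exists>\<epsilon>>0. \<forall>g. continuous_on U g \<and> (\<forall>x\<in>N. dist (g x) (f x) < \<epsilon>) \<longrightarrow>
            isolated_invariant_set U g (Inv U g (N - L)) \<and>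
            filtration_pair U g (Inv U g (N - L)) N L))"
proof -
  note U = assms(2) and fc = assms(3) and cN = assms(5)
  have Nc: "compact N" and NU: "N \<subseteq> U"
    and blk: "f ` N \<inter> N \<inter> {x \<in> U. f x \<in> N} \<subseteq> interior N"
    using assms(4) unfolding isolating_block_def by auto
  have clN: "closed N" using Nc compact_imp_closed by blast
  define W where "W = (U \<inter> f -` (- N)) \<union> (U \<inter> f -` (U \<inter> f -` (- N)))"
  have o1: "open (U \<inter> f -` (- N))" using continuous_open_preimage[OF fc U] clN by auto
  have "open (U \<inter> f -` (U \<inter> f -` (- N)))" using continuous_open_preimage[OF fc U o1] .
  then have oW: "open W" unfolding W_def using o1 by auto
  have EW: "exit_set f N \<subseteq> W"
  proof
    fix x assume x: "x \<in> exit_set f N"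
    then have xN: "x \<in> N" and fx: "f x \<notin> interior N" unfolding exit_set_def by auto
    show "x \<in> W"
    proof (cases "f x \<in> N")
      case False then show ?thesis using xN NU unfolding W_def by auto
    next
      case True
      have "f (f x) \<notin> N"
      proof
        assume "f (f x) \<in> N"
        then have "f x \<in> f ` N \<inter> N \<inter> {x \<in> U. f x \<in> N}" using True xN NU by auto
        then show False using blk fx by blast
      qed
      then show ?thesis using True xN NU unfolding W_def by auto
    qed
  qed
  have InvInt: "Inv U f N \<subseteq> interior N"
  proof
    fix x assume "x \<in> Inv U f N"
    then obtain \<sigma> where s: "is_solution U f \<sigma>" "\<sigma> 0 = x" "\<forall>n. \<sigma> n \<in> N"
      unfolding Inv_def by blast
    have "f (\<sigma> (-1)) = \<sigma> 0" using sol_step[OF s(1), of "-1"] by simp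
    moreover have "f (\<sigma> 0) = \<sigma> 1" using sol_step[OF s(1), of 0] by simp
    ultimately have "x \<in> f ` N \<inter> N \<inter> {x \<in> U. f x \<in> N}" using s NU by (metis (mono_tags, lifting) IntI image_eqI mem_Collect_eq subsetD)
    then show "x \<in> interior N" using blk by blast
  qed
  have InvW: "Inv U f N \<inter> W = {}"
  proof (rule ccontr)
    assume "Inv U f N \<inter> W \<noteq> {}"
    then obtain x where x: "x \<in> Inv U f N" "x \<in> W" by blast
    then obtain \<sigma> where s: "is_solution U f \<sigma>" "\<sigma> 0 = x" "\<forall>n. \<sigma> n \<in> N"
      unfolding Inv_def by blast
    have "f x = \<sigma> 1" using sol_step[OF s(1), of 0] s(2) by simp
    moreover have "f (\<sigma> 1) = \<sigma> 2" using sol_step[OF s(1), of 1] by simp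
    ultimately show False using x(2) s(3) NU unfolding W_def by auto
  qed
  show ?thesis
  proof (intro exI[of _ W] conjI allI impI oW EW)
    fix L assume L: "compact L \<and> L \<subseteq> W \<and> closure (interior L) = L \<and> nbhd_in N L (exit_set f N)"
    then have Lc: "compact L" and LW: "L \<subseteq> W" and cL: "closure (interior L) = L"
      and nb: "nbhd_in N L (exit_set f N)" by auto
    then obtain V where LN: "L \<subseteq> N" and V: "openin (top_of_set N) V" "exit_set f N \<subseteq> V" "V \<subseteq> L"
      unfolding nbhd_in_def by blast
    have clL: "closed L" using Lc compact_imp_closed by blast
    have "closedin (top_of_set N) (N - V)" using V(1) by (simp add: closedin_diff)
    then have "closed (N - V)" using clN closedin_closed_trans by blast
    then have clNL: "closure (N - L) \<subseteq> N - V" using V(3) by (meson Diff_mono closure_minimal order_refl)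
    have fL: "f ` L \<inter> closure (N - L) = {}"
    proof (rule ccontr)
      assume "f ` L \<inter> closure (N - L) \<noteq> {}"
      then obtain y where y: "y \<in> L" "f y \<in> closure (N - L)" by blast
      then have fyN: "f y \<in> N - V" using clNL by auto
      have "y \<in> W" using y LW by auto
      then have "f y \<in> U" "f (f y) \<notin> N" using fyN unfolding W_def by auto
      then have "f y \<in> exit_set f N" using fyN interior_subset unfolding exit_set_def by auto
      then show False using fyN V(2) by auto
    qed
    have fNV: "f ` (N - V) \<subseteq> interior N"
      using V(2) unfolding exit_set_def by auto
    have InvL: "Inv U f N \<inter> L = {}" using InvW LW by auto
    have InvEq: "Inv U f (closure (N - L)) = Inv U f N"
    proof
      show "Inv U f (closure (N - L)) \<subseteq> Inv U f N"
        by (rule Inv_mono) (use clNL in auto)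
      show "Inv U f N \<subseteq> Inv U f (closure (N - L))"
      proof
        fix x assume "x \<in> Inv U f N"
        then obtain \<sigma> where s: "is_solution U f \<sigma>" "\<sigma> 0 = x" "\<forall>n. \<sigma> n \<in> N"
          unfolding Inv_def by blast
        have "\<forall>n. \<sigma> n \<in> closure (N - L)"
        proof
          fix n
          have "\<sigma> n \<in> Inv U f N" by (rule Inv_shift[OF s(1) s(3)])
          then show "\<sigma> n \<in> closure (N - L)" using InvL s(3) closure_subset by blast
        qed
        then show "x \<in> Inv U f (closure (N - L))" unfolding Inv_def using s by blast
      qed
    qed
    have intNL: "interior N - L \<subseteq> interior (closure (N - L))"
    proof -
      have "interior N - L \<subseteq> interior (N - L)"
        using clL by (metis Diff_eq Diff_mono interior_maximal interior_subset open_Diff open_interior order_refl)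
      also have "\<dots> \<subseteq> interior (closure (N - L))" by (simp add: closure_subset interior_mono)
      finally show ?thesis .
    qed
    have cmpNL: "compact (closure (N - L))"
      using closed_Int_compact[OF closed_closure Nc, of "N - L"] clNL by (metis Int_absorb2 Diff_subset order_trans)
    have iso: "isolating_nbhd U f (closure (N - L))"
      unfolding isolating_nbhd_def using cmpNL clNL NU InvEq InvInt InvL intNL by auto
    show "filtration_pair U f (Inv U f N) N L"
      unfolding filtration_pair_def
    proof (intro conjI)
      show "N \<subseteq> interior U" using NU U by (simp add: interior_open)
    qed (use Lc Nc LN cN cL iso InvEq nb fL in auto)
    show "\<exists>\<epsilon>>0. \<forall>g. continuous_on U g \<and> (\<forall>x\<in>N. dist (g x) (f x) < \<epsilon>) \<longrightarrow>
            isolated_invariant_set U g (Inv U g (N - L)) \<and>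
            filtration_pair U g (Inv U g (N - L)) N L"
      by (rule perturb_part[OF U fc NU Nc Lc LN V(1) V(3) fNV fL cN cL])
  qed
qed

end
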